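(* For all integers $n\ge0$ and $p\ge0$, $$\mathcal{B}_{n+1,p}=(n+1)\mathcal{B}_{n,p}-\sum_{k=0}^{n-2}\binom{n}{k}(-1)^{n-k}\mathcal{B}_{k+1,p}-\frac{p}{p+1}\mathcal{B}_{n,p+1},$$ with $\mathcal{B}_{0,p}=1$ (the sum being empty when $n\le1$).
   Context: For an integer $p\ge0$, the $p$-Bell numbers $\mathcal{B}_{n,p}$ are defined by $\sum_{n\ge0}\mathcal{B}_{n,p}\frac{z^n}{n!}=\sum_{n\ge0}\binom{n+p}{p}^{-1}\frac{(e^z-1)^n}{n!}$. *)

theory Defs
  imports "HOL-Computational_Algebra.Formal_Power_Series"
begin

text \<open>Since (e^z-1)^k has order k, only the terms k \<le> n contribute to the coefficient
  of z^n, so the (formally infinite) sum is truncated at k = n.\<close>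

definition pBell_egf_partial :: "nat \<Rightarrow> nat \<Rightarrow> real fps" where
  "pBell_egf_partial N p =
     (\<Sum>k\<le>N. fps_const (1 / real ((k + p) choose p)) * (fps_exp 1 - 1) ^ k / fps_const (fact k))"

definition pBell :: "nat \<Rightarrow> nat \<Rightarrow> real" where
  "pBell n p = fact n * fps_nth (pBell_egf_partial n p) n"

end

theory Submission
  imports Defs
begin

unbundle fps_syntax

definition TT :: "real fps" where "TT = fps_exp 1 - 1"

definition aa :: "nat \<Rightarrow> nat \<Rightarrow> real" where
  "aa n k = fact n * (TT ^ k $ n) / fact k"

definition cc :: "nat \<Rightarrow> nat \<Rightarrow> real" where
  "cc k p = 1 / real ((k + p) choose p)"

lemma TT_sub: "subdegree TT = 1"
  by (rule subdegreeI) (auto simp: TT_def)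

lemma aa_zero: "n < k \<Longrightarrow> aa n k = 0"
  unfolding aa_def using fps_pow_nth_below_subdegree[of n k TT] by (simp add: TT_sub)

lemma pBell_aa: "pBell n p = (\<Sum>k\<le>n. aa n k * cc k p)"
  unfolding pBell_def pBell_egf_partial_def aa_def cc_def TT_def
  by (simp add: fps_sum_nth sum_distrib_left field_simps)

lemma pBell_aa': assumes "n \<le> M" shows "pBell n p = (\<Sum>k\<le>M. aa n k * cc k p)"
proof -
  have "(\<Sum>k\<le>M. aa n k * cc k p) = (\<Sum>k\<le>n. aa n k * cc k p)"
    using assms by (intro sum.mono_neutral_right) (auto simp: aa_zero)
  then show ?thesis by (simp add: pBell_aa)
qed

lemma aa_Suc: "aa (Suc i) (Suc k) = fact i * ((fps_exp 1 * TT ^ k) $ i) / fact k"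
proof -
  have d: "fps_deriv (TT ^ Suc k) = fps_const (of_nat (Suc k)) * fps_exp 1 * TT ^ k"
  proof -
    have "fps_deriv TT = fps_exp 1" by (simp add: TT_def)
    then show ?thesis using fps_deriv_power[of TT "Suc k"] by simp
  qed
  have "fps_deriv (TT ^ Suc k) $ i = of_nat (i+1) * (TT ^ Suc k) $ (i+1)" by (rule fps_deriv_nth)
  then have "of_nat (i+1) * (TT ^ Suc k) $ (i+1) = (fps_const (of_nat (Suc k)) * (fps_exp 1 * TT ^ k)) $ i"
    by (simp only: d mult.assoc)
  then have "of_nat (i+1) * (TT ^ Suc k) $ (i+1) = of_nat (Suc k) * (fps_exp 1 * TT ^ k) $ i"
    by (simp only: fps_mult_left_const_nth)
  moreover have "aa (Suc i) (Suc k) = fact i * (of_nat (Suc i) * (TT ^ Suc k) $ (Suc i)) / (fact k * of_nat (Suc k))"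
    unfolding aa_def by (simp only: fact_Suc mult_ac)
  ultimately have "aa (Suc i) (Suc k) = fact i * (of_nat (Suc k) * (fps_exp 1 * TT ^ k) $ i) / (fact k * of_nat (Suc k))"
    by simp
  then show ?thesis by (simp del: of_nat_Suc)
qed

lemma aa_inv: "(\<Sum>i\<le>n. real (n choose i) * (-1) ^ (n - i) * aa (Suc i) (Suc k)) = aa n k"
proof -
  have e: "fps_exp 1 * TT ^ k * fps_exp (-1) = TT ^ k"
  proof -
    have "fps_exp (1::real) * fps_exp (-1) = fps_exp 0" by (simp add: fps_exp_add_mult[symmetric])
    then have "fps_exp (1::real) * fps_exp (-1) = 1" by simp
    then show ?thesis by (metis mult.commute mult.left_commute mult_1_right)
  qed
  have "aa n k = fact n * ((fps_exp 1 * TT ^ k * fps_exp (-1)) $ n) / fact k"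
    by (simp add: e aa_def)
  also have "\<dots> = fact n * (\<Sum>i=0..n. (fps_exp 1 * TT ^ k) $ i * ((-1) ^ (n - i) / fact (n - i))) / fact k"
    by (simp add: fps_mult_nth)
  also have "\<dots> = (\<Sum>i\<le>n. real (n choose i) * (-1) ^ (n - i) * (fact i * ((fps_exp 1 * TT ^ k) $ i) / fact k))"
    by (simp add: sum_distrib_left sum_divide_distrib atMost_atLeast0 binomial_fact field_simps)
  finally show ?thesis by (simp add: aa_Suc)
qed

lemma cc_key: "cc j p = cc (Suc j) p + real p / real (p+1) * cc j (Suc p)"
proof -
  have 1: "real (Suc (j+p)) * real ((j+p) choose j) = real ((Suc (j+p)) choose (Suc j)) * real (Suc j)"
    by (metis Suc_times_binomial_eq of_nat_mult)
  have 2: "real (Suc (j+p)) * real ((j+p) choose p) = real ((Suc (j+p)) choose (Suc p)) * real (Suc p)"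
    by (metis Suc_times_binomial_eq of_nat_mult)
  have s1: "(j+p) choose j = (j+p) choose p" using binomial_symmetric[of j "j+p"] by simp
  have s2: "(Suc (j+p)) choose (Suc j) = (Suc j + p) choose p"
    using binomial_symmetric[of "Suc j" "Suc (j+p)"] by simp
  define C where "C = real ((j+p) choose p)"
  have Cpos: "C > 0" unfolding C_def by simp
  have e1: "real ((Suc j + p) choose p) = real (Suc (j+p)) * C / real (Suc j)"
  proof -
    have "real (Suc (j+p)) * C = real ((Suc j + p) choose p) * real (Suc j)"
      using 1 unfolding C_def s1 s2 .
    then show ?thesis by (simp add: field_simps del: of_nat_Suc)
  qed
  have e2: "real ((j + Suc p) choose Suc p) = real (Suc (j+p)) * C / real (Suc p)"
    using 2 unfolding C_def by (simp add: field_simps del: of_nat_Suc)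
  define S where "S = real (Suc (j+p))"
  have Spos: "S > 0" unfolding S_def by simp
  have "cc (Suc j) p + real p / real (p+1) * cc j (Suc p)
     = real (Suc j) / (S * C) + real p / (S * C)"
    unfolding cc_def using Cpos Spos
    by (simp only: e1 e2 S_def[symmetric]) (simp add: field_simps del: of_nat_Suc)
  also have "\<dots> = (real (Suc j) + real p) / (S * C)" by (simp add: add_divide_distrib)
  also have "\<dots> = 1 / C"
  proof -
    have "(1 + (real j + real p)) > 0" by simp
    moreover have "C + (C * real j + C * real p) \<noteq> 0"
      using Cpos by (smt (verit) mult_nonneg_nonneg of_nat_0_le_iff)
    ultimately show ?thesis unfolding S_def using Cpos by (simp add: field_simps)
  qed
  finally show ?thesis unfolding cc_def C_def by simp

qed

lemma split_lemma: "pBell n p = (\<Sum>j\<le>n. aa n j * cc (Suc j) p) + real p / real (p+1) * pBell n (Suc p)"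
  unfolding pBell_aa by (subst cc_key) (simp add: algebra_simps sum.distrib sum_distrib_left)

lemma H_lemma: "(\<Sum>k\<le>n. real (n choose k) * (-1) ^ (n - k) * pBell (k+1) p) = (\<Sum>j\<le>n. aa n j * cc (Suc j) p)"
proof -
  have "pBell (k+1) p = (\<Sum>j\<le>n. aa (Suc k) (Suc j) * cc (Suc j) p)" if "k \<le> n" for k
  proof -
    have "pBell (k+1) p = (\<Sum>m\<le>Suc n. aa (Suc k) m * cc m p)" using that pBell_aa'[of "k+1" "Suc n" p] by simp
    also have "\<dots> = aa (Suc k) 0 * cc 0 p + (\<Sum>j\<le>n. aa (Suc k) (Suc j) * cc (Suc j) p)"
      by (subst sum.atMost_Suc_shift) simp
    also have "aa (Suc k) 0 = 0" by (simp add: aa_def)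
    finally show ?thesis by simp
  qed
  then have "(\<Sum>k\<le>n. real (n choose k) * (-1) ^ (n - k) * pBell (k+1) p)
     = (\<Sum>k\<le>n. \<Sum>j\<le>n. real (n choose k) * (-1) ^ (n - k) * aa (Suc k) (Suc j) * cc (Suc j) p)"
    by (simp add: sum_distrib_left mult.assoc)
  also have "\<dots> = (\<Sum>j\<le>n. (\<Sum>k\<le>n. real (n choose k) * (-1) ^ (n - k) * aa (Suc k) (Suc j)) * cc (Suc j) p)"
    by (subst sum.swap) (simp add: sum_distrib_right)
  also have "\<dots> = (\<Sum>j\<le>n. aa n j * cc (Suc j) p)" by (simp add: aa_inv)
  finally show ?thesis .
qed

theorem mainTheorem8:
  fixes n p :: nat
  shows "pBell 0 p = 1 \<and>
    pBell (n + 1) p = real (n + 1) * pBell n p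
      - (\<Sum>k<n - 1. real (n choose k) * (-1) ^ (n - k) * pBell (k + 1) p)
      - real p / real (p + 1) * pBell n (p + 1)"
proof
  show "pBell 0 p = 1" by (simp add: pBell_aa aa_def cc_def)
  have S: "pBell n p = (\<Sum>k\<le>n. real (n choose k) * (-1) ^ (n - k) * pBell (k+1) p) + real p / real (p+1) * pBell n (p + 1)"
    using split_lemma[of n p] H_lemma[of n p] by simp
  show "pBell (n + 1) p = real (n + 1) * pBell n p
      - (\<Sum>k<n - 1. real (n choose k) * (-1) ^ (n - k) * pBell (k + 1) p)
      - real p / real (p + 1) * pBell n (p + 1)"
  proof (cases n)
    case 0
    then show ?thesis using S by simp
  next
    case (Suc m)
    have "(\<Sum>k\<le>n. real (n choose k) * (-1) ^ (n - k) * pBell (k+1) p)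
      = (\<Sum>k<m. real (n choose k) * (-1) ^ (n - k) * pBell (k+1) p)
        + real (n choose m) * (-1) ^ (n - m) * pBell (m+1) p
        + real (n choose n) * (-1) ^ (n - n) * pBell (n+1) p"
      using Suc by (simp add: lessThan_Suc_atMost[symmetric])
    also have "real (n choose m) * (-1) ^ (n - m) * pBell (m+1) p = - real n * pBell n p"
      using Suc by (simp add: algebra_simps)
    finally have E: "(\<Sum>k\<le>n. real (n choose k) * (-1) ^ (n - k) * pBell (k+1) p)
      = (\<Sum>k<n - 1. real (n choose k) * (-1) ^ (n - k) * pBell (k+1) p) - real n * pBell n p
        + pBell (n+1) p" using Suc by (simp add: algebra_simps)
    show ?thesis using S E by (simp only: of_nat_add of_nat_1 distrib_right mult_1)
  qed
qed

end
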